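(* Let $G$ be a finite simple connected graph with minimum degree $\delta(G)\geq 3$. If $Z(G)=3$, then the edge connectivity of $G$ satisfies $\kappa'(G)\geq 3$.
   Context: Zero forcing: color each vertex of $G$ black or white. Color-change rule: if a black vertex $u$ has exactly one white neighbor $v$, then $v$ is recolored black ($u$ "forces" $v$). A set $Z\subseteq V(G)$ is a zero forcing set if, starting with exactly the vertices of $Z$ black and applying the color-change rule repeatedly until no more changes are possible, all vertices become black. The zero forcing number $Z(G)$ is the minimum size of a zero forcing set. $\kappa'(G)$ denotes the edge connectivity of $G$ (the minimum number of edges whose deletion disconnects $G$). *)

theory Defs
  imports Main
begin

definition simple_graph :: "'a set \<Rightarrow> 'a set set \<Rightarrow> bool" where
  "simple_graph V E \<longleftrightarrow> finite V \<and>
     (\<forall>e\<in>E. \<exists>u v. u \<noteq> v \<and> u \<in> V \<and> v \<in> V \<and> e = {u, v})"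

definition nbrs :: "'a set set \<Rightarrow> 'a \<Rightarrow> 'a set" where
  "nbrs E v = {u. {u, v} \<in> E}"

definition degree :: "'a set set \<Rightarrow> 'a \<Rightarrow> nat" where
  "degree E v = card (nbrs E v)"

definition adj_rel :: "'a set set \<Rightarrow> ('a \<times> 'a) set" where
  "adj_rel E = {(x, y). {x, y} \<in> E}"

definition graph_connected :: "'a set \<Rightarrow> 'a set set \<Rightarrow> bool" where
  "graph_connected V E \<longleftrightarrow> (\<forall>u\<in>V. \<forall>v\<in>V. (u, v) \<in> (adj_rel E)\<^sup>*)"

definition edge_connectivity :: "'a set \<Rightarrow> 'a set set \<Rightarrow> nat" where
  "edge_connectivity V E =
     (LEAST k. \<exists>F. F \<subseteq> E \<and> card F = k \<and> \<not> graph_connected V (E - F))"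

text \<open>Set of vertices that end up black when starting with the black set Z and
  repeatedly applying the colour-change rule: a black vertex u whose only white
  neighbour is v forces v.\<close>
inductive_set zf_closure :: "'a set set \<Rightarrow> 'a set \<Rightarrow> 'a set" for E Z where
  init: "z \<in> Z \<Longrightarrow> z \<in> zf_closure E Z"
| force: "\<lbrakk> u \<in> zf_closure E Z; v \<in> nbrs E u;
            \<forall>w\<in>nbrs E u. w \<noteq> v \<longrightarrow> w \<in> zf_closure E Z \<rbrakk>
          \<Longrightarrow> v \<in> zf_closure E Z"

definition zero_forcing_set :: "'a set \<Rightarrow> 'a set set \<Rightarrow> 'a set \<Rightarrow> bool" where
  "zero_forcing_set V E Z \<longleftrightarrow> Z \<subseteq> V \<and> V \<subseteq> zf_closure E Z"

definition zero_forcing_number :: "'a set \<Rightarrow> 'a set set \<Rightarrow> nat" where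
  "zero_forcing_number V E = (LEAST k. \<exists>Z. zero_forcing_set V E Z \<and> card Z = k)"

end

theory Submission
  imports Defs
begin

lemma sg_edge: "simple_graph V E \<Longrightarrow> e \<in> E \<Longrightarrow> \<exists>a b. a \<noteq> b \<and> a \<in> V \<and> b \<in> V \<and> e = {a, b}"
  unfolding simple_graph_def by blast

lemma sg_finV: "simple_graph V E \<Longrightarrow> finite V"
  unfolding simple_graph_def by blast

lemma sg_nbrs_sub: "simple_graph V E \<Longrightarrow> nbrs E v \<subseteq> V"
proof
  fix x assume "simple_graph V E" "x \<in> nbrs E v"
  then have "{x, v} \<in> E" by (simp add: nbrs_def)
  then obtain a b where "a \<in> V" "b \<in> V" "{x, v} = {a, b}" using sg_edge \<open>simple_graph V E\<close> by blast
  then show "x \<in> V" by (auto simp: doubleton_eq_iff)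
qed

lemma sg_in_V: "simple_graph V E \<Longrightarrow> {x, v} \<in> E \<Longrightarrow> x \<in> V"
  using sg_nbrs_sub[of V E v] by (auto simp: nbrs_def)

lemma sg_noloop: "simple_graph V E \<Longrightarrow> v \<notin> nbrs E v"
proof
  assume "simple_graph V E" "v \<in> nbrs E v"
  then have "{v} \<in> E" by (simp add: nbrs_def)
  then obtain a b where "a \<noteq> b" "{v} = {a, b}" using sg_edge \<open>simple_graph V E\<close> by blast
  then show False by (auto simp: doubleton_eq_iff)
qed

lemma nbrs_sym: "u \<in> nbrs E v \<longleftrightarrow> v \<in> nbrs E u"
  by (simp add: nbrs_def insert_commute)

lemma closure_mono:
  assumes "B \<subseteq> B'" shows "zf_closure E B \<subseteq> zf_closure E B'"
proof
  fix x assume "x \<in> zf_closure E B"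
  then show "x \<in> zf_closure E B'"
  proof (induction rule: zf_closure.induct)
    case (init z) then show ?case using assms by (simp add: subset_iff zf_closure.init)
  next
    case (force u v)
    show ?case
    proof (rule zf_closure.force[of u])
      show "u \<in> zf_closure E B'" using force.IH by simp
      show "v \<in> nbrs E u" using force.hyps by simp
      show "\<forall>w\<in>nbrs E u. w \<noteq> v \<longrightarrow> w \<in> zf_closure E B'" using force.IH by blast
    qed
  qed
qed

lemma closure_sub:
  assumes "\<forall>u\<in>B. \<forall>v\<in>nbrs E u. v \<notin> B \<longrightarrow> (\<exists>w\<in>nbrs E u. w \<noteq> v \<and> w \<notin> B)"
  shows "zf_closure E B \<subseteq> B"
proof
  fix x assume "x \<in> zf_closure E B"
  then show "x \<in> B"
    by (induction rule: zf_closure.induct) (use assms in blast)+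
qed

lemma force_exists:
  assumes "V \<subseteq> zf_closure E B" "\<not> V \<subseteq> B"
  shows "\<exists>u v. u \<in> B \<and> v \<in> nbrs E u \<and> v \<notin> B \<and> (\<forall>w\<in>nbrs E u. w \<noteq> v \<longrightarrow> w \<in> B)"
  using closure_sub[of B E] assms by blast

definition act :: "'a set set \<Rightarrow> 'a set \<Rightarrow> 'a set" where
  "act E B = {b\<in>B. \<exists>w\<in>nbrs E b. w \<notin> B}"

lemma lemR:
  assumes sg: "simple_graph V E"
  shows "B \<subseteq> V \<Longrightarrow> V \<subseteq> zf_closure E B \<Longrightarrow> \<not> V \<subseteq> B \<Longrightarrow> \<exists>q\<in>V-B. degree E q \<le> card (act E B)"
proof (induction "card (V - B)" arbitrary: B rule: less_induct)
  case less
  have finV: "finite V" using sg sg_finV by blast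
  obtain u v where u: "u \<in> B" "v \<in> nbrs E u" "v \<notin> B" "\<forall>w\<in>nbrs E u. w \<noteq> v \<longrightarrow> w \<in> B"
    using force_exists[OF less.prems(2) less.prems(3)] by blast
  have vV: "v \<in> V" using sg_nbrs_sub[OF sg] u by blast
  have uact: "u \<in> act E B" using u by (auto simp: act_def)
  have "act E B \<subseteq> V" using less.prems(1) by (auto simp: act_def)
  then have finA: "finite (act E B)" using finV by (rule finite_subset)
  have sub: "act E (insert v B) \<subseteq> insert v (act E B - {u})"
  proof
    fix b assume "b \<in> act E (insert v B)"
    then obtain w where b: "b \<in> insert v B" "w \<in> nbrs E b" "w \<notin> insert v B" by (auto simp: act_def)
    show "b \<in> insert v (act E B - {u})"
    proof (cases "b = v")
      case False
      then have "b \<in> B" using b by auto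
      moreover have "b \<noteq> u" using b u by auto
      ultimately show ?thesis using b by (auto simp: act_def)
    qed simp
  qed
  have c1: "card (act E B - {u}) = card (act E B) - 1" using uact finA by (simp add: card_Diff_singleton)
  have c2: "card (act E B) \<ge> 1" using uact finA by (auto simp: Suc_le_eq card_gt_0_iff)
  have c3: "card (insert v (act E B - {u})) \<le> Suc (card (act E B - {u}))"
    using finA by (simp add: card_insert_if)
  have finI: "finite (insert v (act E B - {u}))" using finA by simp
  have cardle: "card (act E (insert v B)) \<le> card (act E B)"
    using card_mono[OF finI sub] c1 c2 c3 by linarith
  show ?case
  proof (cases "V \<subseteq> insert v B")
    case True
    have "nbrs E v \<subseteq> act E B"
    proof
      fix x assume x: "x \<in> nbrs E v"
      then have "x \<in> V" using sg_nbrs_sub[OF sg] by blast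
      moreover have "x \<noteq> v" using x sg_noloop[OF sg] by blast
      ultimately have "x \<in> B" using True by blast
      moreover have "v \<in> nbrs E x" using x nbrs_sym by metis
      ultimately show "x \<in> act E B" using u(3) by (auto simp: act_def)
    qed
    then have "degree E v \<le> card (act E B)" unfolding degree_def using finA card_mono by blast
    then show ?thesis using vV u(3) by blast
  next
    case False
    have "card (V - insert v B) < card (V - B)"
      using vV u(3) finV by (metis Diff_insert card_Diff1_less finite_Diff insert_Diff insert_iff Diff_iff)
    moreover have "insert v B \<subseteq> V" using vV less.prems by blast
    moreover have "V \<subseteq> zf_closure E (insert v B)"
      using less.prems(2) closure_mono[of B "insert v B" E] by blast
    ultimately obtain q where q: "q \<in> V - insert v B" "degree E q \<le> card (act E (insert v B))"
      using less.hyps False by blast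
    have "q \<in> V - B" using q(1) by blast
    moreover have "degree E q \<le> card (act E B)" using q(2) cardle by linarith
    ultimately show ?thesis by blast
  qed
qed


theorem mainTheorem1:
  fixes V :: "'a set" and E :: "'a set set"
  assumes "simple_graph V E"
    and "graph_connected V E"
    and "\<forall>v\<in>V. degree E v \<ge> 3"
    and "zero_forcing_number V E = 3"
  shows "edge_connectivity V E \<ge> 3"
proof (rule ccontr)
  assume "\<not> edge_connectivity V E \<ge> 3"
  then have lt: "edge_connectivity V E < 3" by simp
  note sg = assms(1)
  have finV: "finite V" using sg sg_finV by blast
  have EV: "\<And>e. e \<in> E \<Longrightarrow> e \<subseteq> V" using sg_edge[OF sg] by blast
  have "E \<subseteq> Pow V" using EV by blast
  moreover have "finite (Pow V)" using finV by simp
  ultimately have finE: "finite E" by (rule finite_subset)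
  have exZ: "\<exists>k Z. zero_forcing_set V E Z \<and> card Z = k"
    by (rule exI[of _ "card V"], rule exI[of _ V]) (auto simp: zero_forcing_set_def intro: zf_closure.init)
  obtain Z where Z: "zero_forcing_set V E Z" "card Z = 3"
    using LeastI_ex[OF exZ] assms(4) unfolding zero_forcing_number_def by auto
  have ZV: "Z \<subseteq> V" and Zc: "V \<subseteq> zf_closure E Z" using Z by (auto simp: zero_forcing_set_def)
  have finZ: "finite Z" using ZV finV finite_subset by blast
  have "card V \<ge> 3" using card_mono[OF finV ZV] Z by simp
  then have "V \<noteq> {}" by auto
  then obtain x0 where x0: "x0 \<in> V" by blast
  have "card (V - {x0}) \<ge> 2" using \<open>card V \<ge> 3\<close> x0 finV by simp
  then have "V - {x0} \<noteq> {}" by (metis card.empty not_numeral_le_zero)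
  then obtain y0 where "y0 \<in> V - {x0}" by blast
  then have xy0: "x0 \<in> V" "y0 \<in> V" "x0 \<noteq> y0" using x0 by auto
  have exF: "\<exists>k F. F \<subseteq> E \<and> card F = k \<and> \<not> graph_connected V (E - F)"
  proof (intro exI conjI)
    show "E \<subseteq> E" by simp
    have "adj_rel (E - E) = {}" by (simp add: adj_rel_def)
    then show "\<not> graph_connected V (E - E)" using xy0 by (auto simp: graph_connected_def)
  qed simp
  obtain F where F: "F \<subseteq> E" "card F = edge_connectivity V E" "\<not> graph_connected V (E - F)"
    using LeastI_ex[OF exF] unfolding edge_connectivity_def by blast
  have cF: "card F \<le> 2" using F lt by simp
  have finF: "finite F" using F finE finite_subset by blast
  define R where "R = adj_rel (E - F)"
  obtain x y where xy: "x \<in> V" "y \<in> V" "(x, y) \<notin> R\<^sup>*"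
    using F(3) unfolding graph_connected_def R_def by blast
  have notZ: "\<not> V \<subseteq> Z"
  proof
    assume "V \<subseteq> Z"
    have "nbrs E x \<subseteq> Z - {x}" using sg_nbrs_sub[OF sg] sg_noloop[OF sg, of x] \<open>V \<subseteq> Z\<close> by blast
    then have "card (nbrs E x) \<le> card (Z - {x})" using card_mono[of "Z - {x}"] finZ by simp
    also have "\<dots> = 2" using Z(2) \<open>V \<subseteq> Z\<close> xy(1) finZ by (simp add: card_Diff_singleton subset_iff)
    finally have "card (nbrs E x) \<le> 2" .
    moreover have "3 \<le> card (nbrs E x)" using assms(3) xy(1) by (simp add: degree_def)
    ultimately show False by linarith
  qed
  obtain u v where uv: "u \<in> Z" "v \<in> nbrs E u" "v \<notin> Z" "\<forall>w\<in>nbrs E u. w \<noteq> v \<longrightarrow> w \<in> Z"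
    using force_exists[OF Zc notZ] by blast
  have uV: "u \<in> V" using uv ZV by blast
  have finN: "finite (nbrs E u)" using sg_nbrs_sub[OF sg] finV finite_subset by blast
  have Nsub: "nbrs E u \<subseteq> insert v (Z - {u})" using uv sg_noloop[OF sg, of u] by blast
  have "card (Z - {u}) = 2" using Z(2) uv(1) finZ by (simp add: card_Diff_singleton)
  moreover have "card (insert v (Z - {u})) \<le> card (Z - {u}) + 1"
    using finZ by (simp add: card_insert_le_m1 card_insert_if)
  ultimately have "card (insert v (Z - {u})) \<le> 3" by simp
  moreover have "card (nbrs E u) \<ge> 3" using assms(3) uV by (simp add: degree_def)
  ultimately have "card (insert v (Z - {u})) \<le> card (nbrs E u)" by linarith
  moreover have "finite (insert v (Z - {u}))" using finZ by simp
  ultimately have "nbrs E u = insert v (Z - {u})" using card_seteq Nsub by blast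
  then have Zn: "\<And>z. z \<in> Z \<Longrightarrow> z \<noteq> u \<Longrightarrow> z \<in> nbrs E u" by blast
  define T0 where "T0 = {w \<in> V. (x, w) \<in> R\<^sup>*}"
  define T where "T = (if u \<in> T0 then V - T0 else T0)"
  have TV: "T \<subseteq> V" by (auto simp: T_def T0_def)
  have uT: "u \<notin> T" by (auto simp: T_def)
  have Tne: "T \<noteq> {}" using xy by (auto simp: T_def T0_def)
  have cross: "\<And>t s. t \<in> T \<Longrightarrow> s \<notin> T \<Longrightarrow> {s, t} \<in> E \<Longrightarrow> {s, t} \<in> F"
  proof (rule ccontr)
    fix t s assume a: "t \<in> T" "s \<notin> T" "{s, t} \<in> E" "{s, t} \<notin> F"
    have sV: "s \<in> V" using sg_in_V[OF sg a(3)] .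
    have tV: "t \<in> V" using a TV by blast
    have st: "(s, t) \<in> R" using a by (simp add: R_def adj_rel_def)
    have ts: "(t, s) \<in> R" using a by (simp add: R_def adj_rel_def insert_commute)
    have "(x, s) \<in> R\<^sup>* \<longleftrightarrow> (x, t) \<in> R\<^sup>*"
      using rtrancl_into_rtrancl[OF _ st, of x] rtrancl_into_rtrancl[OF _ ts, of x] by blast
    then have "s \<in> T0 \<longleftrightarrow> t \<in> T0" using sV tV unfolding T0_def by simp
    then show False using a sV tV by (auto simp: T_def split: if_splits)
  qed
  have finT: "finite T" using TV finV by (rule finite_subset)
  define Nout where "Nout t = {s. s \<notin> T \<and> {s, t} \<in> E}" for t
  define P where "P = Sigma T Nout"
  have NoutV: "Nout t \<subseteq> V" for t using sg_in_V[OF sg] by (auto simp: Nout_def)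
  have finNout: "finite (Nout t)" for t using NoutV finV by (rule finite_subset)
  have finP: "finite P" unfolding P_def using TV NoutV finV
    by (meson finite_SigmaI finite_subset)
  have injP: "inj_on (\<lambda>(t, s). {s, t}) P"
    by (auto simp: inj_on_def P_def Nout_def doubleton_eq_iff)
  have imP: "(\<lambda>(t, s). {s, t}) ` P \<subseteq> F"
    using cross by (auto simp: P_def Nout_def)
  have cP: "card P \<le> 2" using card_inj_on_le[OF injP imP finF] cF by simp
  define ET where "ET = {t \<in> T. Nout t \<noteq> {}}"
  have "ET \<subseteq> T" by (auto simp: ET_def)
  then have finET: "finite ET" using finT by (rule finite_subset)
  have "ET \<subseteq> fst ` P"
  proof
    fix t assume "t \<in> ET"
    then obtain s where "t \<in> T" "s \<in> Nout t" by (auto simp: ET_def)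
    then have ts: "(t, s) \<in> P" by (simp add: P_def)
    have "t = fst (t, s)" by simp
    then show "t \<in> fst ` P" using ts by (rule image_eqI)
  qed
  then have "card ET \<le> card (fst ` P)" using finP by (simp add: card_mono)
  also have "\<dots> \<le> card P" using finP by (rule card_image_le)
  finally have cET: "card ET \<le> 2" using cP by simp
  have TET: "\<not> T \<subseteq> ET"
  proof
    assume "T \<subseteq> ET"
    then have "card T \<le> card ET" using finET by (simp add: card_mono)
    then have cT: "card T \<le> 2" using cET by linarith
    have cT1: "card T \<ge> 1" using Tne finT by (simp add: Suc_leI card_gt_0_iff)
    have each: "card T + card (Nout t) \<ge> 4" if t: "t \<in> T" for t
    proof -
      have "nbrs E t \<subseteq> (T - {t}) \<union> Nout t"
        using sg_noloop[OF sg, of t] by (auto simp: Nout_def nbrs_def)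
      moreover have "finite ((T - {t}) \<union> Nout t)" using finT finNout by simp
      ultimately have "card (nbrs E t) \<le> card ((T - {t}) \<union> Nout t)"
        by (simp add: card_mono)
      also have "\<dots> \<le> card (T - {t}) + card (Nout t)" by (rule card_Un_le)
      also have "card (T - {t}) = card T - 1" using t finT by simp
      finally have "card (nbrs E t) \<le> card T - 1 + card (Nout t)" .
      moreover have "3 \<le> card (nbrs E t)" using assms(3) t TV by (auto simp: degree_def)
      ultimately show ?thesis using cT1 by linarith
    qed
    have "card P = (\<Sum>t\<in>T. card (Nout t))" unfolding P_def
      using finT finNout by (simp add: card_SigmaI)
    also have "\<dots> \<ge> (\<Sum>t\<in>T. 4 - card T)"
    proof (rule sum_mono)
      fix t assume "t \<in> T"
      then show "4 - card T \<le> card (Nout t)" using each[of t] by linarith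
    qed
    finally have "card P \<ge> card T * (4 - card T)" by simp
    moreover have "card T = 1 \<or> card T = 2" using cT cT1 by linarith
    then have "card T * (4 - card T) \<ge> 3" by auto
    ultimately show False using cP by simp
  qed
  define B where "B = (V - T) \<union> ET"
  have BV: "B \<subseteq> V" using TV by (auto simp: B_def ET_def)
  have ZB: "Z \<subseteq> B"
  proof
    fix z assume z: "z \<in> Z"
    show "z \<in> B"
    proof (cases "z \<in> T")
      case True
      then have "z \<noteq> u" using uT by blast
      then have "{z, u} \<in> E" using Zn z by (simp add: nbrs_def)
      then have "u \<in> Nout z" using uT by (simp add: Nout_def insert_commute)
      then show ?thesis using True by (auto simp: B_def ET_def)
    next
      case False
      then show ?thesis using z ZV by (auto simp: B_def)
    qed
  qed
  have Bc: "V \<subseteq> zf_closure E B" using Zc closure_mono[OF ZB] by blast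
  have notB: "\<not> V \<subseteq> B" using TET TV by (auto simp: B_def)
  have actB: "act E B \<subseteq> ET"
  proof
    fix b assume "b \<in> act E B"
    then obtain w where b: "b \<in> B" "w \<in> nbrs E b" "w \<notin> B" by (auto simp: act_def)
    have wV: "w \<in> V" using b sg_nbrs_sub[OF sg] by blast
    then have wT: "w \<in> T" "w \<notin> ET" using b by (auto simp: B_def)
    show "b \<in> ET"
    proof (rule ccontr)
      assume "b \<notin> ET"
      then have "b \<notin> T" using b by (auto simp: B_def)
      then have "b \<in> Nout w" using b by (simp add: Nout_def nbrs_def insert_commute)
      then show False using wT by (auto simp: ET_def)
    qed
  qed
  obtain q where q: "q \<in> V - B" "degree E q \<le> card (act E B)"
    using lemR[OF sg BV Bc notB] by blast
  have "card (act E B) \<le> 2" using card_mono[OF finET actB] cET by simp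
  moreover have "3 \<le> degree E q" using assms(3) q(1) by blast
  ultimately show False using q(2) by linarith
qed

end
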